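(* Let $\mathcal A$ be an NBA and let $R$ be a strict partial order on its states with $R\subseteq\ \subseteq^{\mathrm{bw\text{-}di}}$. Then $P(R,\mathrm{id})$ is good for pruning, i.e. $\mathcal L(\mathrm{Prune}(\mathcal A,P(R,\mathrm{id})))=\mathcal L(\mathcal A)$. In particular this holds for $R$ the strict part of backward direct trace inclusion.
   Context: An NBA is $\mathcal A=(\Sigma,Q,I,F,\delta)$, $\delta\subseteq Q\times\Sigma\times Q$, assumed forward and backward complete; initial traces start in $I$, fair traces are infinite and visit $F$ infinitely often, the language is the set of infinite words with an initial fair trace. Backward direct trace inclusion: $p\subseteq^{\mathrm{bw\text{-}di}}q$ iff for every finite word $\sigma_0\cdots\sigma_{m-1}$ and every initial finite trace $p_0\xrightarrow{\sigma_0}\cdots\xrightarrow{\sigma_{m-1}}p_m=p$ there is an initial finite trace $q_0\xrightarrow{\sigma_0}\cdots\xrightarrow{\sigma_{m-1}}q_m=q$ with $p_i\in F\Rightarrow q_i\in F$ for all $0\le i\le m$. Strict part: $p\subseteq q$ and not $q\subseteq p$. For $P\subseteq\delta\times\delta$, $\mathrm{Prune}(\mathcal A,P)$ has transition set $\{t\in\delta:\nexists t'\in\delta,\ (t,t')\in P\}$. For $R_b,R_f\subseteq Q\times Q$, $P(R_b,R_f)=\{((p,\sigma,r),(p',\sigma,r'))\in\delta\times\delta:p\,R_b\,p',\ r\,R_f\,r'\}$; $\mathrm{id}$ is the identity relation. *)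

theory Defs
  imports Main
begin

record ('a, 's) nba =
  alph   :: "'a set"
  states :: "'s set"
  init   :: "'s set"
  acc    :: "'s set"
  delta  :: "('s \<times> 'a \<times> 's) set"

definition nba_wf :: "('a, 's) nba \<Rightarrow> bool" where
  "nba_wf A \<longleftrightarrow> finite (alph A) \<and> finite (states A)
     \<and> init A \<subseteq> states A \<and> acc A \<subseteq> states A
     \<and> delta A \<subseteq> states A \<times> alph A \<times> states A
     \<and> (\<forall>p\<in>states A. \<forall>a\<in>alph A. \<exists>q. (p, a, q) \<in> delta A)
     \<and> (\<forall>q\<in>states A. \<forall>a\<in>alph A. \<exists>p. (p, a, q) \<in> delta A)"

definition lang :: "('a, 's) nba \<Rightarrow> (nat \<Rightarrow> 'a) set" where
  "lang A = {w. \<exists>r. r 0 \<in> init A \<and> (\<forall>i. (r i, w i, r (Suc i)) \<in> delta A)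
                   \<and> (\<exists>\<^sub>\<infinity>i. r i \<in> acc A)}"

definition init_trace :: "('a, 's) nba \<Rightarrow> nat \<Rightarrow> (nat \<Rightarrow> 'a) \<Rightarrow> (nat \<Rightarrow> 's) \<Rightarrow> bool" where
  "init_trace A m w r \<longleftrightarrow> r 0 \<in> init A \<and> (\<forall>i<m. (r i, w i, r (Suc i)) \<in> delta A)"

definition bw_di :: "('a, 's) nba \<Rightarrow> ('s \<times> 's) set" where
  "bw_di A = {(p, q). \<forall>m w ps. init_trace A m w ps \<and> ps m = p \<longrightarrow>
      (\<exists>qs. init_trace A m w qs \<and> qs m = q \<and>
            (\<forall>i\<le>m. ps i \<in> acc A \<longrightarrow> qs i \<in> acc A))}"

definition strict_part :: "('s \<times> 's) set \<Rightarrow> ('s \<times> 's) set" where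
  "strict_part R = {(p, q). (p, q) \<in> R \<and> (q, p) \<notin> R}"

definition prune :: "('a, 's) nba \<Rightarrow> (('s \<times> 'a \<times> 's) \<times> ('s \<times> 'a \<times> 's)) set \<Rightarrow> ('a, 's) nba" where
  "prune A P = A\<lparr>delta := {t \<in> delta A. \<not> (\<exists>t'\<in>delta A. (t, t') \<in> P)}\<rparr>"

definition prel :: "('a, 's) nba \<Rightarrow> ('s \<times> 's) set \<Rightarrow> ('s \<times> 's) set
    \<Rightarrow> (('s \<times> 'a \<times> 's) \<times> ('s \<times> 'a \<times> 's)) set" where
  "prel A Rb Rf = {((p, a, r), (p', a', r')).
      (p, a, r) \<in> delta A \<and> (p', a', r') \<in> delta A \<and> a = a'
      \<and> (p, p') \<in> Rb \<and> (r, r') \<in> Rf}"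

end

theory Submission
  imports Defs
begin

definition goodt :: "'s set \<Rightarrow> ('s \<times> 'a \<times> 's) set \<Rightarrow> 's set \<Rightarrow> (nat \<Rightarrow> 's) \<Rightarrow> (nat \<Rightarrow> 'a)
   \<Rightarrow> nat \<Rightarrow> (nat \<Rightarrow> 's) \<Rightarrow> bool" where
  "goodt I D Acc r w n qs \<longleftrightarrow> qs 0 \<in> I \<and> (\<forall>i<n. (qs i, w i, qs (Suc i)) \<in> D)
     \<and> (\<forall>i\<le>n. r i \<in> Acc \<longrightarrow> qs i \<in> Acc)"

definition extp where
  "extp I D Acc r w m qs \<longleftrightarrow> (\<forall>n\<ge>m. \<exists>qs'. goodt I D Acc r w n qs' \<and> (\<forall>i<m. qs' i = qs i))"

lemma goodt_mono: "goodt I D Acc r w n qs \<Longrightarrow> m \<le> n \<Longrightarrow> goodt I D Acc r w m qs"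
  unfolding goodt_def by auto

lemma ext_step:
  assumes fin: "finite S" and DS: "\<forall>(p,a,q)\<in>D. p \<in> S"
    and e: "extp I D Acc r w m qs"
  shows "\<exists>s. extp I D Acc r w (Suc m) (qs(m := s))"
proof (rule ccontr)
  assume "\<not> ?thesis"
  hence "\<forall>s. \<exists>n\<ge>Suc m. \<not> (\<exists>qs'. goodt I D Acc r w n qs' \<and> (\<forall>i<Suc m. qs' i = (qs(m := s)) i))"
    unfolding extp_def by blast
  then obtain f where f: "\<And>s. f s \<ge> Suc m \<and> \<not> (\<exists>qs'. goodt I D Acc r w (f s) qs' \<and> (\<forall>i<Suc m. qs' i = (qs(m := s)) i))"
    by metis
  define N where "N = Max (f ` S \<union> {Suc m})"
  have finN: "finite (f ` S \<union> {Suc m})" using fin by auto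
  have N1: "N \<ge> Suc m" unfolding N_def using finN by (meson Max_ge UnI2 singletonI)
  obtain qs' where g: "goodt I D Acc r w N qs'" and ag: "\<forall>i<m. qs' i = qs i"
    using e N1 unfolding extp_def by (meson Suc_leD)
  have "(qs' m, w m, qs' (Suc m)) \<in> D" using g N1 unfolding goodt_def by auto
  hence s0: "qs' m \<in> S" using DS by auto
  have "f (qs' m) \<le> N" unfolding N_def using finN s0 by (meson Max_ge UnI1 imageI)
  hence "goodt I D Acc r w (f (qs' m)) qs'" using g goodt_mono by blast
  moreover have "\<forall>i<Suc m. qs' i = (qs(m := qs' m)) i" using ag by (simp add: less_Suc_eq)
  ultimately show False using f[of "qs' m"] by blast
qed

lemma konig:
  assumes fin: "finite S" and DS: "\<forall>(p,a,q)\<in>D. p \<in> S"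
    and all: "\<forall>n. \<exists>qs. goodt I D Acc r w n qs"
  shows "\<exists>\<rho>. \<rho> 0 \<in> I \<and> (\<forall>i. (\<rho> i, w i, \<rho> (Suc i)) \<in> D) \<and> (\<forall>i. r i \<in> Acc \<longrightarrow> \<rho> i \<in> Acc)"
proof -
  define h where "h = rec_nat r (\<lambda>m qs. qs(m := SOME s. extp I D Acc r w (Suc m) (qs(m := s))))"
  have h0: "h 0 = r" unfolding h_def by simp
  have hS: "\<And>m. h (Suc m) = (h m)(m := SOME s. extp I D Acc r w (Suc m) ((h m)(m := s)))"
    unfolding h_def by simp
  have ex: "extp I D Acc r w m (h m)" for m
  proof (induction m)
    case 0 show ?case using all unfolding extp_def by auto
  next
    case (Suc m)
    from ext_step[OF fin DS Suc] show ?case unfolding hS by (rule someI_ex)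
  qed
  have stab: "h (k + Suc i) i = h (Suc i) i" for k i
    by (induction k) (auto simp: hS)
  define \<rho> where "\<rho> i = h (Suc i) i" for i
  have key: "\<exists>qs'. goodt I D Acc r w (Suc (Suc i)) qs' \<and> qs' i = \<rho> i \<and> qs' (Suc i) = \<rho> (Suc i)" for i
  proof -
    obtain qs' where g: "goodt I D Acc r w (Suc (Suc i)) qs'"
      and ag: "\<forall>j<Suc (Suc i). qs' j = h (Suc (Suc i)) j"
      using ex[of "Suc (Suc i)"] unfolding extp_def by blast
    have "h (Suc (Suc i)) i = \<rho> i" using stab[of 1 i] unfolding \<rho>_def by simp
    thus ?thesis using g ag unfolding \<rho>_def by auto
  qed
  have "\<rho> 0 \<in> I" using key[of 0] unfolding goodt_def by auto
  moreover have "(\<rho> i, w i, \<rho> (Suc i)) \<in> D" for i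
  proof -
    obtain qs' where g: "goodt I D Acc r w (Suc (Suc i)) qs'" and a: "qs' i = \<rho> i" "qs' (Suc i) = \<rho> (Suc i)"
      using key by blast
    have "\<forall>j<Suc (Suc i). (qs' j, w j, qs' (Suc j)) \<in> D" using g unfolding goodt_def by simp
    hence "(qs' i, w i, qs' (Suc i)) \<in> D" by simp
    thus ?thesis using a by simp
  qed
  moreover have "r i \<in> Acc \<longrightarrow> \<rho> i \<in> Acc" for i
  proof -
    obtain qs' where g: "goodt I D Acc r w (Suc (Suc i)) qs'" and a: "qs' i = \<rho> i"
      using key by blast
    have "\<forall>j\<le>Suc (Suc i). r j \<in> Acc \<longrightarrow> qs' j \<in> Acc" using g unfolding goodt_def by simp
    hence "r i \<in> Acc \<longrightarrow> qs' i \<in> Acc" by simp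
    thus ?thesis using a by simp
  qed
  ultimately show ?thesis by blast
qed

lemma prune_simps:
  "init (prune A P) = init A" "acc (prune A P) = acc A"
  "delta (prune A P) = {t \<in> delta A. \<not> (\<exists>t'\<in>delta A. (t, t') \<in> P)}"
  unfolding prune_def by simp_all

lemma claim:
  assumes wfR: "wf {(y,x). (x,y) \<in> R \<and> x \<in> states A \<and> y \<in> states A}"
    and Rb: "R \<subseteq> bw_di A" and wfA: "nba_wf A"
  shows "init_trace A n w ps \<Longrightarrow> \<exists>qs. init_trace (prune A (prel A R Id)) n w qs \<and> qs n = ps n
     \<and> (\<forall>i\<le>n. ps i \<in> acc A \<longrightarrow> qs i \<in> acc A)"
proof (induction n arbitrary: ps)
  case 0
  then show ?case by (intro exI[of _ ps]) (auto simp: init_trace_def prune_simps)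
next
  case (Suc n)
  have dS: "delta A \<subseteq> states A \<times> alph A \<times> states A" using wfA unfolding nba_wf_def by auto
  have "\<forall>ps. init_trace A (Suc n) w ps \<longrightarrow> ps n = x \<longrightarrow> (\<exists>qs. init_trace (prune A (prel A R Id)) (Suc n) w qs \<and> qs (Suc n) = ps (Suc n)
     \<and> (\<forall>i\<le>Suc n. ps i \<in> acc A \<longrightarrow> qs i \<in> acc A))" for x
  proof (induction x rule: wf_induct[OF wfR])
    case (1 x)
    show ?case
    proof (intro allI impI)
      fix ps assume tr: "init_trace A (Suc n) w ps" and px: "ps n = x"
      have trn: "init_trace A n w ps" using tr unfolding init_trace_def by auto
      have t: "(ps n, w n, ps (Suc n)) \<in> delta A" using tr unfolding init_trace_def by auto
      show "\<exists>qs. init_trace (prune A (prel A R Id)) (Suc n) w qs \<and> qs (Suc n) = ps (Suc n)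
         \<and> (\<forall>i\<le>Suc n. ps i \<in> acc A \<longrightarrow> qs i \<in> acc A)"
      proof (cases "\<exists>t'\<in>delta A. ((ps n, w n, ps (Suc n)), t') \<in> prel A R Id")
        case False
        obtain qs where q: "init_trace (prune A (prel A R Id)) n w qs" "qs n = ps n"
          "\<forall>i\<le>n. ps i \<in> acc A \<longrightarrow> qs i \<in> acc A" using Suc.IH[OF trn] by blast
        define qs2 where "qs2 = qs(Suc n := ps (Suc n))"
        have "init_trace (prune A (prel A R Id)) (Suc n) w qs2"
          using q(1,2) t False unfolding init_trace_def qs2_def
          by (auto simp: prune_simps less_Suc_eq)
        moreover have "\<forall>i\<le>Suc n. ps i \<in> acc A \<longrightarrow> qs2 i \<in> acc A"
          using q(3) unfolding qs2_def by (auto simp: le_Suc_eq)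
        ultimately show ?thesis unfolding qs2_def by auto
      next
        case True
        then obtain p' where p': "(p', w n, ps (Suc n)) \<in> delta A" "(ps n, p') \<in> R"
          unfolding prel_def by auto
        have "(ps n, p') \<in> bw_di A" using p' Rb by auto
        then obtain qs where qs: "init_trace A n w qs" "qs n = p'"
          "\<forall>i\<le>n. ps i \<in> acc A \<longrightarrow> qs i \<in> acc A"
        proof -
          have "\<forall>m w' ps'. init_trace A m w' ps' \<and> ps' m = ps n \<longrightarrow>
              (\<exists>qs. init_trace A m w' qs \<and> qs m = p' \<and>
                  (\<forall>i\<le>m. ps' i \<in> acc A \<longrightarrow> qs i \<in> acc A))"
            using \<open>(ps n, p') \<in> bw_di A\<close> unfolding bw_di_def by simp
          hence "\<exists>qs. init_trace A n w qs \<and> qs n = p' \<and>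
                  (\<forall>i\<le>n. ps i \<in> acc A \<longrightarrow> qs i \<in> acc A)" using trn by blast
          thus ?thesis using that by blast
        qed
        define qs2 where "qs2 = qs(Suc n := ps (Suc n))"
        have tr2: "init_trace A (Suc n) w qs2"
          using qs p' unfolding init_trace_def qs2_def by (auto simp: less_Suc_eq)
        have "(p', x) \<in> {(y,x). (x,y) \<in> R \<and> x \<in> states A \<and> y \<in> states A}"
          using p' t dS px by auto
        moreover have "qs2 n = p'" using qs unfolding qs2_def by simp
        ultimately obtain qs3 where q3: "init_trace (prune A (prel A R Id)) (Suc n) w qs3"
          "qs3 (Suc n) = qs2 (Suc n)" "\<forall>i\<le>Suc n. qs2 i \<in> acc A \<longrightarrow> qs3 i \<in> acc A"
          using 1[rule_format, of p' qs2] tr2 by blast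
        have "\<forall>i\<le>Suc n. ps i \<in> acc A \<longrightarrow> qs3 i \<in> acc A"
          using q3(3) qs(3) unfolding qs2_def by (auto simp: le_Suc_eq)
        thus ?thesis using q3 unfolding qs2_def by auto
      qed
    qed
  qed
  thus ?case using Suc.prems by blast
qed

lemma main:
  assumes wfA: "nba_wf A" and irr: "irrefl R" and tr: "trans R" and Rb: "R \<subseteq> bw_di A"
  shows "lang (prune A (prel A R Id)) = lang A"
proof
  show "lang (prune A (prel A R Id)) \<subseteq> lang A"
    unfolding lang_def by (auto simp: prune_simps)
next
  have fin: "finite (states A)" and dS: "delta A \<subseteq> states A \<times> alph A \<times> states A"
    using wfA unfolding nba_wf_def by auto
  define R' where "R' = R \<inter> (states A \<times> states A)"
  have "trans R'" using tr unfolding R'_def trans_def by blast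
  hence "R'\<^sup>+ = R'" by (rule trancl_id)
  moreover have "irrefl R'" using irr unfolding R'_def irrefl_def by blast
  ultimately have "acyclic R'" unfolding acyclic_def irrefl_def by simp
  hence "acyclic (R'\<inverse>)" by (simp add: acyclic_converse)
  moreover have "finite (R'\<inverse>)" unfolding R'_def using fin by auto
  ultimately have "wf (R'\<inverse>)" by (simp add: finite_acyclic_wf)
  moreover have "R'\<inverse> = {(y,x). (x,y) \<in> R \<and> x \<in> states A \<and> y \<in> states A}" unfolding R'_def by auto
  ultimately have wfR: "wf {(y,x). (x,y) \<in> R \<and> x \<in> states A \<and> y \<in> states A}" by simp
  show "lang A \<subseteq> lang (prune A (prel A R Id))"
  proof
    fix w assume "w \<in> lang A"
    then obtain r where r: "r 0 \<in> init A" "\<forall>i. (r i, w i, r (Suc i)) \<in> delta A" "\<exists>\<^sub>\<infinity>i. r i \<in> acc A"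
      unfolding lang_def by blast
    let ?D = "delta (prune A (prel A R Id))"
    have all: "\<forall>n. \<exists>qs. goodt (init A) ?D (acc A) r w n qs"
    proof
      fix n
      have "init_trace A n w r" using r unfolding init_trace_def by auto
      from claim[OF wfR Rb wfA this] show "\<exists>qs. goodt (init A) ?D (acc A) r w n qs"
        unfolding goodt_def init_trace_def by (auto simp: prune_simps)
    qed
    have DS: "\<forall>(p,a,q)\<in>?D. p \<in> states A" using dS by (auto simp: prune_simps)
    obtain \<rho> where rho: "\<rho> 0 \<in> init A" "\<forall>i. (\<rho> i, w i, \<rho> (Suc i)) \<in> ?D"
      "\<forall>i. r i \<in> acc A \<longrightarrow> \<rho> i \<in> acc A" using konig[OF fin DS all] by blast
    have "\<exists>\<^sub>\<infinity>i. \<rho> i \<in> acc A" using frequently_mono[OF rho(3) r(3)] .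
    thus "w \<in> lang (prune A (prel A R Id))" using rho unfolding lang_def by (auto simp: prune_simps)
  qed
qed

lemma bw_di_trans: "trans (bw_di A)"
  unfolding trans_def bw_di_def by (smt (verit) case_prodD case_prodI mem_Collect_eq)

theorem theorem5p2:
  fixes A :: "('a, 's) nba" and R :: "('s \<times> 's) set"
  assumes "nba_wf A"
    and "R \<subseteq> states A \<times> states A" and "irrefl R" and "trans R"
    and "R \<subseteq> bw_di A"
  shows "lang (prune A (prel A R Id)) = lang A
       \<and> lang (prune A (prel A (strict_part (bw_di A)) Id)) = lang A"
proof
  show "lang (prune A (prel A R Id)) = lang A" using main assms by blast
  have "irrefl (strict_part (bw_di A))" unfolding irrefl_def strict_part_def by auto
  moreover have "trans (strict_part (bw_di A))"
  proof (rule transI)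
    fix p q s assume pq: "(p, q) \<in> strict_part (bw_di A)" and qs: "(q, s) \<in> strict_part (bw_di A)"
    have t: "\<And>x y z. (x, y) \<in> bw_di A \<Longrightarrow> (y, z) \<in> bw_di A \<Longrightarrow> (x, z) \<in> bw_di A"
      by (rule transD[OF bw_di_trans])
    have 1: "(p, q) \<in> bw_di A" "(q, p) \<notin> bw_di A" using pq unfolding strict_part_def by auto
    have 2: "(q, s) \<in> bw_di A" "(s, q) \<notin> bw_di A" using qs unfolding strict_part_def by auto
    have "(p, s) \<in> bw_di A" using t 1 2 by blast
    moreover have "(s, p) \<notin> bw_di A" using t[of s p q] 1 2 by blast
    ultimately show "(p, s) \<in> strict_part (bw_di A)" unfolding strict_part_def by simp
  qed
  moreover have "strict_part (bw_di A) \<subseteq> bw_di A" unfolding strict_part_def by auto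
  ultimately show "lang (prune A (prel A (strict_part (bw_di A)) Id)) = lang A"
    using main assms(1) by blast
qed

end
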